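(* Fix $\omega$, let $v$ be a blocked path, let $\hat v(i)=v(i-\delta)+2\delta v'(i-\delta)$ for $i\in\mathbb{Z}$ and $\Delta_d\hat v(i)=\hat v(i+1)-2\hat v(i)+\hat v(i-1)$. Let $\hat F=F\int_{\delta}^{1-\delta}\chi_A^\varepsilon(x)\,dx$. Then $F(1-2(\delta+\varepsilon))\le\hat F\le(1-2\delta)F$, and for every $i\in\mathbb{Z}$ $$-2\delta\big[v'(i-1+\delta)-v'(i-1-\delta)\big]\le\Delta_d\hat v(i)+\hat F\le(1+2\delta)\big[v'(i+\delta)-v'(i-\delta)\big].$$
   Context: Fix $0<\delta\ll1/2$, $F>0$ and $\varepsilon\in(0,\tfrac12-\delta)$. Let $\mathbb{Z}^*=\mathbb{Z}+\tfrac12$, $b_{i,j}=(i,j)$; $\phi\in C_c^\infty(\mathbb{R}^2)$ nonnegative with support in $[-\delta,\delta]^2$, $\phi_{i,j}(x,s)=\phi((x,s)-b_{i,j})$; $(l(i,j)(\omega))_{(i,j)\in\mathbb{Z}\times\mathbb{Z}^*}$ nonnegative (i.i.d. exponential) random variables. Let $A=\mathbb{R}\setminus\bigcup_{i\in\mathbb{Z}}(i-\delta,i+\delta)$, $A_\varepsilon=\mathbb{R}\setminus\bigcup_{i\in\mathbb{Z}}(i-\delta-\varepsilon,i+\delta+\varepsilon)$, and $\chi_A^\varepsilon$ a smooth $1$-periodic function with $\chi_{A_\varepsilon}\le\chi_A^\varepsilon\le\chi_A$. A blocked path is a function $v\in C^1_{loc}(\mathbb{R})$ such that for every $i\in\mathbb{Z}$: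 $v''(x)=-F\chi_A^\varepsilon(x)$ on $(i+\delta,i+1-\delta)$ and $v''(x)=\sum_{j\in\mathbb{Z}^*}l(i,j)(\omega)\phi_{i,j}(x,v(x))$ on $(i-\delta,i+\delta)$. *)

theory Defs
  imports "HOL-Analysis.Analysis"
begin

coinductive smooth_fun :: "('a::real_normed_vector \<Rightarrow> real) \<Rightarrow> bool" where
  "(\<forall>x. f differentiable (at x)) \<Longrightarrow>
   (\<forall>h. smooth_fun (\<lambda>x. frechet_derivative f (at x) h)) \<Longrightarrow> smooth_fun f"

definition setA :: "real \<Rightarrow> real set" where
  "setA \<delta> = UNIV - (\<Union>i::int. {real_of_int i - \<delta> <..< real_of_int i + \<delta>})"

definition setA_eps :: "real \<Rightarrow> real \<Rightarrow> real set" where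
  "setA_eps \<delta> \<epsilon> = UNIV - (\<Union>i::int. {real_of_int i - \<delta> - \<epsilon> <..< real_of_int i + \<delta> + \<epsilon>})"

definition half_ints :: "real set" where
  "half_ints = {j. \<exists>k::int. j = real_of_int k + 1/2}"

text \<open>Blocked path (for a fixed realisation l of the random weights, indexed by
  (i,j) with i an integer and j a half-integer).\<close>
definition blocked_path ::
  "real \<Rightarrow> real \<Rightarrow> (real \<times> real \<Rightarrow> real) \<Rightarrow> (int \<Rightarrow> real \<Rightarrow> real) \<Rightarrow> (real \<Rightarrow> real)
   \<Rightarrow> (real \<Rightarrow> real) \<Rightarrow> bool" where
  "blocked_path \<delta> F \<phi> l chi v \<longleftrightarrow>
     (\<forall>x. v differentiable (at x)) \<and> continuous_on UNIV (deriv v) \<and>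
     (\<forall>i::int. \<forall>x \<in> {real_of_int i + \<delta> <..< real_of_int i + 1 - \<delta>}.
        (deriv v has_real_derivative (- F * chi x)) (at x)) \<and>
     (\<forall>i::int. \<forall>x \<in> {real_of_int i - \<delta> <..< real_of_int i + \<delta>}.
        (deriv v has_real_derivative
           (\<Sum>\<^sub>\<infinity>j\<in>half_ints. l i j * \<phi> (x - real_of_int i, v x - j))) (at x))"

end

theory Submission
  imports Defs
begin

lemma per_int:
  fixes chi :: "real \<Rightarrow> real"
  assumes "\<forall>x. chi (x + 1) = chi x"
  shows "chi (x + real_of_int k) = chi x"
proof -
  have n: "chi (y + real n) = chi y" for y n
  proof (induction n arbitrary: y)
    case 0 then show ?case by simp
  next
    case (Suc n)
    have "chi (y + real (Suc n)) = chi ((y + real n) + 1)" by (simp add: algebra_simps)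
    also have "\<dots> = chi (y + real n)" using assms by blast
    finally show ?case using Suc by simp
  qed
  show ?thesis
  proof (cases "k \<ge> 0")
    case True
    then obtain n where "k = int n" by (metis nonneg_eq_int)
    then show ?thesis using n by simp
  next
    case False
    then obtain n where k: "k = - int n" by (metis linorder_not_le neg_eq_iff_add_eq_0 nonneg_eq_int add.commute less_le minus_less_iff neg_0_less_iff_less)
    have "chi x = chi ((x - real n) + real n)" by simp
    also have "\<dots> = chi (x - real n)" using n by blast
    finally show ?thesis using k by simp
  qed
qed

lemma shiftD:
  fixes f :: "real \<Rightarrow> real"
  assumes "DERIV f (x + c) :> d"
  shows "DERIV (\<lambda>x. f (x + c)) x :> d"
proof -
  have "DERIV (\<lambda>x. x + c) x :> 1" by (auto intro!: derivative_eq_intros)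
  from DERIV_chain2[OF assms this] show ?thesis by simp
qed

lemma alg:
  fixes \<delta> FI a0 b0 am bm a1 vA1 va0 vb0 vam vbm :: real
  assumes G1: "a1 = b0 - FI" and G0: "a0 = bm - FI"
   and W: "vA1 - vb0 - (va0 - vbm) = (1-2*\<delta>)*(b0 - bm)"
   and M1: "a0 \<le> b0" "2*\<delta>*a0 \<le> vb0 - va0" "vb0 - va0 \<le> 2*\<delta>*b0"
   and M0: "am \<le> bm" "2*\<delta>*am \<le> vbm - vam" "vbm - vam \<le> 2*\<delta>*bm"
  shows "-2*\<delta>*(bm - am) \<le> (vA1 + 2*\<delta>*a1) - 2*(va0 + 2*\<delta>*a0) + (vam + 2*\<delta>*am) + FI
    \<and> (vA1 + 2*\<delta>*a1) - 2*(va0 + 2*\<delta>*a0) + (vam + 2*\<delta>*am) + FI \<le> (1+2*\<delta>)*(b0 - a0)"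
proof -
  have bm: "bm = a0 + FI" using G0 by simp
  have vA: "vA1 = vb0 + (va0 - vbm) + (1-2*\<delta>)*(b0 - bm)" using W by linarith
  have eq: "(vA1 + 2*\<delta>*a1) - 2*(va0 + 2*\<delta>*a0) + (vam + 2*\<delta>*am) + FI
     = (b0-a0) + (vb0-va0-2*\<delta>*a0) - (vbm-vam-2*\<delta>*am)"
    unfolding vA G1 bm by (simp add: algebra_simps)
  have x: "2*\<delta>*(b0-a0) = 2*\<delta>*b0 - 2*\<delta>*a0" "2*\<delta>*(bm-am) = 2*\<delta>*bm - 2*\<delta>*am"
    "(1+2*\<delta>)*(b0 - a0) = (b0 - a0) + (2*\<delta>*b0 - 2*\<delta>*a0)" by (simp_all add: algebra_simps)
  show ?thesis unfolding eq using M1 M0 x by linarith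
qed

theorem mainTheorem5:
  fixes \<delta> F \<epsilon> :: real
    and \<phi> :: "real \<times> real \<Rightarrow> real"
    and l :: "int \<Rightarrow> real \<Rightarrow> real"
    and chi v :: "real \<Rightarrow> real"
  assumes hdelta: "0 < \<delta>" "\<delta> < 1/2"
    and hF: "0 < F"
    and heps: "0 < \<epsilon>" "\<epsilon> < 1/2 - \<delta>"
    and hphi_smooth: "smooth_fun \<phi>"
    and hphi_nonneg: "\<forall>p. 0 \<le> \<phi> p"
    and hphi_supp: "\<forall>x s. \<phi> (x, s) \<noteq> 0 \<longrightarrow> \<bar>x\<bar> \<le> \<delta> \<and> \<bar>s\<bar> \<le> \<delta>"
    and hl: "\<forall>i j. j \<in> half_ints \<longrightarrow> 0 \<le> l i j"
    and hchi_smooth: "smooth_fun chi"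
    and hchi_per: "\<forall>x. chi (x + 1) = chi x"
    and hchi_lo: "\<forall>x. indicator (setA_eps \<delta> \<epsilon>) x \<le> chi x"
    and hchi_hi: "\<forall>x. chi x \<le> indicator (setA \<delta>) x"
    and hv: "blocked_path \<delta> F \<phi> l chi v"
  shows "F * (1 - 2 * (\<delta> + \<epsilon>)) \<le> F * integral {\<delta>..1 - \<delta>} chi
       \<and> F * integral {\<delta>..1 - \<delta>} chi \<le> (1 - 2 * \<delta>) * F
       \<and> (\<forall>i::int.
           let vh = (\<lambda>k::int. v (real_of_int k - \<delta>) + 2 * \<delta> * deriv v (real_of_int k - \<delta>));
               Fh = F * integral {\<delta>..1 - \<delta>} chi;
               Dd = vh (i + 1) - 2 * vh i + vh (i - 1)
           in - 2 * \<delta> * (deriv v (real_of_int i - 1 + \<delta>) - deriv v (real_of_int i - 1 - \<delta>)) \<le> Dd + Fh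
              \<and> Dd + Fh \<le> (1 + 2 * \<delta>) * (deriv v (real_of_int i + \<delta>) - deriv v (real_of_int i - \<delta>)))"
proof -
  define D where "D = deriv v"
  have chidiff: "\<forall>x. chi differentiable (at x)" using hchi_smooth by (cases rule: smooth_fun.cases) auto
  have chicont: "continuous_on S chi" for S
    using chidiff by (meson continuous_at_imp_continuous_on differentiable_imp_continuous_within)
  have chiint: "chi integrable_on {a..b}" for a b
    using chicont integrable_continuous_interval by blast
  have chi01: "0 \<le> chi x" "chi x \<le> 1" for x
  proof -
    have "indicator (setA_eps \<delta> \<epsilon>) x \<le> chi x" "chi x \<le> indicator (setA \<delta>) x"
      using hchi_lo hchi_hi by auto
    moreover have "0 \<le> (indicator (setA_eps \<delta> \<epsilon>) x::real)" "(indicator (setA \<delta>) x::real) \<le> 1"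
      by (auto simp: indicator_def)
    ultimately show "0 \<le> chi x" "chi x \<le> 1" by linarith+
  qed
  have dv: "DERIV v x :> D x" for x
    using hv unfolding blocked_path_def D_def by (simp add: DERIV_deriv_iff_real_differentiable)
  have contD: "continuous_on S D" for S
    using hv unfolding blocked_path_def D_def by (meson continuous_on_subset top_greatest)
  have gap: "DERIV D x :> - F * chi x" if "real_of_int i + \<delta> < x" "x < real_of_int i + 1 - \<delta>" for i x
    using hv that unfolding blocked_path_def D_def by auto
  have bump: "\<exists>y. DERIV D x :> y \<and> 0 \<le> y" if "real_of_int i - \<delta> < x" "x < real_of_int i + \<delta>" for i x
  proof -
    have "\<forall>j\<in>half_ints. 0 \<le> l i j * \<phi> (x - real_of_int i, v x - j)"
      using hl hphi_nonneg by auto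
    then have "0 \<le> (\<Sum>\<^sub>\<infinity>j\<in>half_ints. l i j * \<phi> (x - real_of_int i, v x - j))"
      by (intro infsum_nonneg) blast
    moreover have "DERIV D x :> (\<Sum>\<^sub>\<infinity>j\<in>half_ints. l i j * \<phi> (x - real_of_int i, v x - j))"
      using hv that unfolding blocked_path_def D_def by simp
    ultimately show ?thesis by blast
  qed
  define I where "I = integral {\<delta>..1 - \<delta>} chi"
  have Iup: "I \<le> 1 - 2*\<delta>"
  proof -
    have "I \<le> integral {\<delta>..1 - \<delta>} (\<lambda>x. 1::real)"
      unfolding I_def by (rule integral_le) (auto simp: chiint chi01)
    then show ?thesis using hdelta by simp
  qed
  have Ilo: "1 - 2*(\<delta>+\<epsilon>) \<le> I"
  proof -
    have ge1: "1 \<le> chi x" if "\<delta>+\<epsilon> \<le> x" "x \<le> 1-\<delta>-\<epsilon>" for x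
    proof -
      have "x \<in> setA_eps \<delta> \<epsilon>"
      proof (unfold setA_eps_def, clarsimp)
        fix k :: int assume a: "real_of_int k - \<delta> - \<epsilon> < x" "x < real_of_int k + \<delta> + \<epsilon>"
        have "k < 2" using a that heps hdelta by linarith
        moreover have "k > -1" using a that heps hdelta by linarith
        ultimately have "k = 0 \<or> k = 1" by linarith
        then show False
        proof
          assume "k = 0" then have "real_of_int k = 0" by simp
          then show False using a that by linarith
        next
          assume "k = 1" then have "real_of_int k = 1" by simp
          then show False using a that by linarith
        qed
      qed
      then show ?thesis using hchi_lo[rule_format, of x] by simp
    qed
    have "integral {\<delta>+\<epsilon>..1-\<delta>-\<epsilon>} (\<lambda>x. 1::real) \<le> integral {\<delta>+\<epsilon>..1-\<delta>-\<epsilon>} chi"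
      by (rule integral_le) (auto simp: chiint ge1)
    also have "\<dots> \<le> I" unfolding I_def
      by (rule integral_subset_le) (use heps in \<open>auto simp: chiint chi01\<close>)
    finally show ?thesis using heps hdelta by simp
  qed
  have G: "D (real_of_int i + 1 - \<delta>) = D (real_of_int i + \<delta>) - F * I" for i
  proof -
    let ?q = "\<lambda>x. D (x + real_of_int i)"
    have "((\<lambda>x. - F * chi x) has_integral (?q (1-\<delta>) - ?q \<delta>)) {\<delta>..1-\<delta>}"
    proof (rule fundamental_theorem_of_calculus_interior)
      show "\<delta> \<le> 1 - \<delta>" using hdelta by simp
      show "continuous_on {\<delta>..1 - \<delta>} ?q"
        by (intro continuous_on_compose2[OF contD[of UNIV]] continuous_intros) auto
      fix x assume x: "x \<in> {\<delta><..<1 - \<delta>}"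
      have "DERIV D (x + real_of_int i) :> - F * chi (x + real_of_int i)"
        by (rule gap[of i]) (use x in auto)
      then have "DERIV ?q x :> - F * chi (x + real_of_int i)"
        by (rule shiftD)
      then show "(?q has_vector_derivative - F * chi x) (at x)"
        using per_int[OF hchi_per] by (simp add: has_real_derivative_iff_has_vector_derivative)
    qed
    moreover have "((\<lambda>x. - F * chi x) has_integral (- F * I)) {\<delta>..1-\<delta>}"
      unfolding I_def using chiint by (intro has_integral_mult_right) (simp add: integrable_integral)
    ultimately have "?q (1-\<delta>) - ?q \<delta> = - F * I" by (rule has_integral_unique)
    then show ?thesis by (simp add: algebra_simps)
  qed
  have W: "v (real_of_int i + 1 - \<delta>) - v (real_of_int i + \<delta>) - (v (real_of_int i - \<delta>) - v (real_of_int i - 1 + \<delta>))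
      = (1 - 2*\<delta>) * (D (real_of_int i + \<delta>) - D (real_of_int i - 1 + \<delta>))" for i
  proof -
    define c where "c = D (real_of_int i + \<delta>) - D (real_of_int i - 1 + \<delta>)"
    let ?s = "\<lambda>x. D (x + real_of_int i) - D (x + real_of_int (i - 1))"
    have sc: "?s x = c" if "\<delta> \<le> x" "x \<le> 1 - \<delta>" for x
    proof -
      have "?s x = ?s \<delta>"
      proof (rule DERIV_isconst2[OF _ _ _ that])
        show "\<delta> < 1 - \<delta>" using hdelta by simp
        show "continuous_on {\<delta>..1 - \<delta>} ?s"
          by (intro continuous_intros continuous_on_compose2[OF contD[of UNIV]]) auto
        fix y assume y: "\<delta> < y" "y < 1 - \<delta>"
        have d1: "DERIV D (y + real_of_int i) :> - F * chi (y + real_of_int i)"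
          by (rule gap[of i]) (use y in auto)
        have d2: "DERIV D (y + real_of_int (i - 1)) :> - F * chi (y + real_of_int (i - 1))"
          by (rule gap[of "i-1"]) (use y in auto)
        have e1: "DERIV (\<lambda>x. D (x + real_of_int i)) y :> - F * chi (y + real_of_int i)"
          using d1 by (rule shiftD)
        have e2: "DERIV (\<lambda>x. D (x + real_of_int (i-1))) y :> - F * chi (y + real_of_int (i-1))"
          using d2 by (rule shiftD)
        have "DERIV ?s y :> - F * chi (y + real_of_int i) - - F * chi (y + real_of_int (i-1))"
          using DERIV_diff[OF e1 e2] by simp
        moreover have "chi (y + real_of_int i) = chi y" "chi (y + real_of_int (i-1)) = chi y"
          using per_int[OF hchi_per, of y i] per_int[OF hchi_per, of y "i-1"] by auto
        ultimately show "DERIV ?s y :> 0" by simp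
      qed
      then show ?thesis unfolding c_def by (simp add: algebra_simps)
    qed
    let ?r = "\<lambda>x. v (x + real_of_int i) - v (x + real_of_int (i - 1)) - c * x"
    have "?r (1 - \<delta>) = ?r \<delta>"
    proof (rule DERIV_isconst_end[where f="?r"])
      show "\<delta> < 1 - \<delta>" using hdelta by simp
      have cv: "continuous_on UNIV v" using dv
        by (meson DERIV_isCont continuous_at_imp_continuous_on)
      show "continuous_on {\<delta>..1 - \<delta>} ?r"
        by (intro continuous_intros continuous_on_compose2[OF cv]) auto
      fix y assume y: "\<delta> < y" "y < 1 - \<delta>"
      have e1: "DERIV (\<lambda>x. v (x + real_of_int i)) y :> D (y + real_of_int i)"
        using dv by (rule shiftD)
      have e2: "DERIV (\<lambda>x. v (x + real_of_int (i - 1))) y :> D (y + real_of_int (i - 1))"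
        using dv by (rule shiftD)
      have e3: "DERIV (\<lambda>x. c * x) y :> c" by (auto intro!: derivative_eq_intros)
      have "DERIV ?r y :> D (y + real_of_int i) - D (y + real_of_int (i - 1)) - c"
        by (intro DERIV_diff e1 e2 e3)
      moreover have "D (y + real_of_int i) - D (y + real_of_int (i - 1)) - c = 0"
        using sc[of y] y by simp
      ultimately show "DERIV ?r y :> 0" by simp
    qed
    then show ?thesis unfolding c_def[symmetric] by (simp add: algebra_simps)
  qed
  have M: "D (real_of_int i - \<delta>) \<le> D (real_of_int i + \<delta>)
     \<and> 2*\<delta>*D (real_of_int i - \<delta>) \<le> v (real_of_int i + \<delta>) - v (real_of_int i - \<delta>)
     \<and> v (real_of_int i + \<delta>) - v (real_of_int i - \<delta>) \<le> 2*\<delta>*D (real_of_int i + \<delta>)" for i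
  proof -
    let ?a = "real_of_int i - \<delta>" and ?b = "real_of_int i + \<delta>"
    have mono: "D x \<le> D y" if "?a \<le> x" "x \<le> y" "y \<le> ?b" for x y
      by (rule DERIV_nonneg_imp_increasing_open[OF that(2)]) (use that bump[of i] contD in auto)
    have cv: "continuous_on S v" for S using dv
      by (meson DERIV_isCont continuous_at_imp_continuous_on)
    have "?a \<le> ?b" using hdelta by simp
    have 1: "v ?a - D ?a * ?a \<le> v ?b - D ?a * ?b"
    proof (rule DERIV_nonneg_imp_increasing_open[OF \<open>?a \<le> ?b\<close>])
      fix x assume "?a < x" "x < ?b"
      then show "\<exists>y. DERIV (\<lambda>x. v x - D ?a * x) x :> y \<and> 0 \<le> y"
        using mono[of ?a x] by (intro exI[of _ "D x - D ?a"]) (auto intro!: derivative_eq_intros dv)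
    qed (intro continuous_intros cv)
    have 2: "D ?b * ?a - v ?a \<le> D ?b * ?b - v ?b"
    proof (rule DERIV_nonneg_imp_increasing_open[OF \<open>?a \<le> ?b\<close>])
      fix x assume "?a < x" "x < ?b"
      then show "\<exists>y. DERIV (\<lambda>x. D ?b * x - v x) x :> y \<and> 0 \<le> y"
        using mono[of x ?b] by (intro exI[of _ "D ?b - D x"]) (auto intro!: derivative_eq_intros dv)
    qed (intro continuous_intros cv)
    have 3: "D ?a \<le> D ?b" using mono \<open>?a \<le> ?b\<close> by simp
    show ?thesis using 1 2 3 by (simp add: algebra_simps)
  qed
  have main: "- 2 * \<delta> * (D (real_of_int i - 1 + \<delta>) - D (real_of_int i - 1 - \<delta>))
       \<le> (v (real_of_int (i+1) - \<delta>) + 2 * \<delta> * D (real_of_int (i+1) - \<delta>))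
          - 2 * (v (real_of_int i - \<delta>) + 2 * \<delta> * D (real_of_int i - \<delta>))
          + (v (real_of_int (i-1) - \<delta>) + 2 * \<delta> * D (real_of_int (i-1) - \<delta>)) + F * I
     \<and> (v (real_of_int (i+1) - \<delta>) + 2 * \<delta> * D (real_of_int (i+1) - \<delta>))
          - 2 * (v (real_of_int i - \<delta>) + 2 * \<delta> * D (real_of_int i - \<delta>))
          + (v (real_of_int (i-1) - \<delta>) + 2 * \<delta> * D (real_of_int (i-1) - \<delta>)) + F * I
       \<le> (1 + 2 * \<delta>) * (D (real_of_int i + \<delta>) - D (real_of_int i - \<delta>))" for i
  proof -
    define x where "x = real_of_int i"
    have G1: "D (x + 1 - \<delta>) = D (x + \<delta>) - F * I" using G[of i] x_def by simp
    have G0: "D (x - \<delta>) = D (x - 1 + \<delta>) - F * I" using G[of "i-1"] x_def by simp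
    have W1: "v (x + 1 - \<delta>) - v (x + \<delta>) - (v (x - \<delta>) - v (x - 1 + \<delta>))
      = (1 - 2*\<delta>) * (D (x + \<delta>) - D (x - 1 + \<delta>))" using W[of i] x_def by simp
    have M1: "D (x - \<delta>) \<le> D (x + \<delta>)
     \<and> 2*\<delta>*D (x - \<delta>) \<le> v (x + \<delta>) - v (x - \<delta>)
     \<and> v (x + \<delta>) - v (x - \<delta>) \<le> 2*\<delta>*D (x + \<delta>)" using M[of i] x_def by simp
    have M0: "D (x - 1 - \<delta>) \<le> D (x - 1 + \<delta>)
     \<and> 2*\<delta>*D (x - 1 - \<delta>) \<le> v (x - 1 + \<delta>) - v (x - 1 - \<delta>)
     \<and> v (x - 1 + \<delta>) - v (x - 1 - \<delta>) \<le> 2*\<delta>*D (x - 1 + \<delta>)" using M[of "i-1"] x_def by simp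
    have R: "-2*\<delta>*(D (x - 1 + \<delta>) - D (x - 1 - \<delta>)) \<le> (v (x + 1 - \<delta>) + 2*\<delta>*D (x + 1 - \<delta>)) - 2*(v (x - \<delta>) + 2*\<delta>*D (x - \<delta>)) + (v (x - 1 - \<delta>) + 2*\<delta>*D (x - 1 - \<delta>)) + F * I
    \<and> (v (x + 1 - \<delta>) + 2*\<delta>*D (x + 1 - \<delta>)) - 2*(v (x - \<delta>) + 2*\<delta>*D (x - \<delta>)) + (v (x - 1 - \<delta>) + 2*\<delta>*D (x - 1 - \<delta>)) + F * I \<le> (1+2*\<delta>)*(D (x + \<delta>) - D (x - \<delta>))"
      using M1 M0 by (intro alg[OF G1 G0 W1]) auto
    have eqs: "real_of_int (i+1) - \<delta> = x + 1 - \<delta>" "real_of_int (i-1) - \<delta> = x - 1 - \<delta>"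
      "real_of_int i - 1 + \<delta> = x - 1 + \<delta>" "real_of_int i - 1 - \<delta> = x - 1 - \<delta>"
      unfolding x_def by simp_all
    show ?thesis unfolding eqs x_def[symmetric] using R by linarith
  qed
  have f1: "F*(1-2*(\<delta>+\<epsilon>)) \<le> F*I" using Ilo hF by (intro mult_left_mono) auto
  have "F*I \<le> F*(1-2*\<delta>)" using Iup hF by (intro mult_left_mono) auto
  then have f2: "F*I \<le> (1-2*\<delta>)*F" by (simp add: mult.commute)
  show ?thesis
    unfolding D_def[symmetric] I_def[symmetric] Let_def
    by (intro conjI allI f1 f2 main)
qed

end
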